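(* Let $\{X(t):\, t\in\mathbb{R}^d\}$ be a stationary centered Gaussian random field with unit variance and covariance function $\rho$ satisfying $\int_{\mathbb{R}^d}|\rho(t)|\,dt<\infty$, and suppose there exist $\alpha\in(0,2]$ and $c>0$ with $1-\rho(t)\cong c\|t\|^\alpha$ as $t\to0$. Fix $\epsilon>0$ and let $B(u)\cong\int_{[-\epsilon,\epsilon]^d}\int_0^{\rho(t)}\varphi(u,u,y)\,dy\,dt$ as $u\to\infty$. Then for every $\delta\in(0,1)$, $$\limsup_{u\to\infty}\frac{B(u)}{2\left(\frac{2}{2-\delta}\right)^{1/2}\frac{\varphi(u)}{u}\int_{[-\epsilon,\epsilon]^d}\overline{\Phi}\left(u\left[\frac{1-\rho(t)}{2}\right]^{1/2}\right)dt}\le 1$$ and $$\liminf_{u\to\infty}\frac{B(u)}{[2(2-\delta)]^{1/2}\frac{\varphi(u)}{u}\int_{[-\epsilon,\epsilon]^d}\overline{\Phi}\left(u\left[\frac{1-\rho(t)}{2-\delta}\right]^{1/2}\right)dt}\ge 1 .$$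
   Context: $\varphi$ is the standard Gaussian density and $\overline{\Phi}(x)=\int_x^\infty\varphi(s)\,ds$ its tail. $\varphi(u,u,y)=\frac{1}{2\pi\sqrt{1-y^2}}\exp\left(\frac{-u^2}{1+y}\right)$ is the density at $(u,u)$ of the bivariate centered normal vector with unit variances and correlation $y$. $f\cong g$ means the ratio $f/g$ tends to $1$; $\|\cdot\|$ is the Euclidean norm. *)

theory Defs
  imports "HOL-Probability.Probability" "HOL-Library.Landau_Symbols"
begin

definition std_phi :: "real \<Rightarrow> real" where
  "std_phi x = exp (- (x\<^sup>2) / 2) / sqrt (2 * pi)"

definition Phi_bar :: "real \<Rightarrow> real" where
  "Phi_bar x = (LINT s:{x..}|lborel. std_phi s)"

text \<open>Density at (u,u) of the centered bivariate normal with unit variances, correlation y.\<close>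
definition phi2 :: "real \<Rightarrow> real \<Rightarrow> real" where
  "phi2 u y = exp (- (u\<^sup>2) / (1 + y)) / (2 * pi * sqrt (1 - y\<^sup>2))"

definition gaussian_rv :: "'w measure \<Rightarrow> ('w \<Rightarrow> real) \<Rightarrow> bool" where
  "gaussian_rv M Y \<longleftrightarrow>
     (\<exists>\<mu> \<sigma>. 0 < \<sigma> \<and> distributed M lborel Y (normal_density \<mu> \<sigma>)) \<or>
     (Y \<in> borel_measurable M \<and> (\<exists>c. AE \<omega> in M. Y \<omega> = c))"

definition stationary_gaussian_field ::
  "'w measure \<Rightarrow> ('d::euclidean_space \<Rightarrow> 'w \<Rightarrow> real) \<Rightarrow> ('d \<Rightarrow> real) \<Rightarrow> bool" where
  "stationary_gaussian_field M X \<rho> \<longleftrightarrow>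
     prob_space M \<and>
     (\<forall>S a. finite S \<longrightarrow> gaussian_rv M (\<lambda>\<omega>. \<Sum>t\<in>S. a t * X t \<omega>)) \<and>
     (\<forall>t. integral\<^sup>L M (X t) = 0) \<and>
     (\<forall>t. integral\<^sup>L M (\<lambda>\<omega>. (X t \<omega>)\<^sup>2) = 1) \<and>
     (\<forall>s t. integral\<^sup>L M (\<lambda>\<omega>. X s \<omega> * X t \<omega>) = \<rho> (s - t))"

end

theory Submission
  imports Defs "HOL-Real_Asymp.Real_Asymp"
begin


lemma std_phi_eq: "std_phi x = std_normal_density x"
  by (simp add: std_phi_def std_normal_density_def)

lemma std_phi_pos: "std_phi x > 0"
  by (simp add: std_phi_def)

lemma std_phi_cont[continuous_intros]: "continuous_on A std_phi"
  unfolding std_phi_def by (intro continuous_intros) auto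

lemma isCont_std_phi: "isCont std_phi x"
  unfolding std_phi_def by (intro continuous_intros) auto

lemma std_phi_meas[measurable]: "std_phi \<in> borel_measurable borel"
  unfolding std_phi_def by measurable

lemma integrable_std_phi: "integrable lborel std_phi"
proof -
  have "integrable lborel (\<lambda>x. std_normal_density x * x ^ 0)"
    by (rule integrable_std_normal_moment)
  then show ?thesis by (simp add: std_phi_eq[abs_def])
qed

lemma set_integrable_std_phi: "A \<in> sets lborel \<Longrightarrow> set_integrable lborel A std_phi"
  unfolding set_integrable_def using integrable_std_phi
  by (intro integrable_mult_indicator) auto

lemma interval_integrable_std_phi: "interval_lebesgue_integrable lborel a b std_phi"
  unfolding interval_lebesgue_integrable_def by (auto intro!: set_integrable_std_phi)

lemma Phi_bar_interval: "Phi_bar x = (LBINT s=ereal x..\<infinity>. std_phi s)"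
proof -
  have "(LBINT s=ereal x..\<infinity>. std_phi s) = (LINT s:{x<..}|lborel. std_phi s)"
    by (rule interval_integral_to_infinity_eq)
  also have "\<dots> = (LINT s:{x..}|lborel. std_phi s)"
    by (rule set_integral_discrete_difference[where X="{x}"]) auto
  finally show ?thesis by (simp add: Phi_bar_def)
qed

lemma Phi_bar_split: "Phi_bar x = (LBINT s=x..y. std_phi s) + Phi_bar y"
  unfolding Phi_bar_interval
  by (rule interval_integral_sum[symmetric]) (rule interval_integrable_std_phi)

lemma Phi_bar_alt: "Phi_bar x = Phi_bar 0 - (LBINT s=ereal 0..ereal x. std_phi s)"
  using Phi_bar_split[of x 0] interval_integral_endpoints_reverse[where f=std_phi and a="ereal x" and b="ereal 0"]
  by simp

lemma DERIV_Phi_bar: "DERIV Phi_bar x :> - std_phi x"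
proof -
  define a where "a = min x 0 - 1"
  define b where "b = max x 0 + 1"
  have "((\<lambda>u. LBINT y=ereal 0..ereal u. std_phi y) has_vector_derivative (std_phi x)) (at x within {a..b})"
    by (rule interval_integral_FTC2) (auto simp: a_def b_def intro!: continuous_intros)
  then have "((\<lambda>u. LBINT y=ereal 0..ereal u. std_phi y) has_vector_derivative (std_phi x)) (at x)"
    by (simp add: at_within_Icc_at a_def b_def)
  then have "((\<lambda>u. Phi_bar 0 - (LBINT y=ereal 0..ereal u. std_phi y)) has_real_derivative (- std_phi x)) (at x)"
    by (auto intro!: derivative_eq_intros simp: has_real_derivative_iff_has_vector_derivative)
  then show ?thesis
    by (simp add: Phi_bar_alt[symmetric])
qed

lemma isCont_Phi_bar: "isCont Phi_bar x"
  using DERIV_Phi_bar DERIV_isCont by blast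

lemma continuous_on_Phi_bar[continuous_intros]: "continuous_on A Phi_bar"
  using isCont_Phi_bar by (simp add: continuous_at_imp_continuous_on)

lemma Phi_bar_meas[measurable]: "Phi_bar \<in> borel_measurable borel"
  by (rule borel_measurable_continuous_onI) (rule continuous_on_Phi_bar)

lemma Phi_bar_nonneg: "Phi_bar x \<ge> 0"
  unfolding Phi_bar_def set_lebesgue_integral_def
  by (rule integral_nonneg_AE) (auto intro!: AE_I2 mult_nonneg_nonneg less_imp_le[OF std_phi_pos])

lemma Phi_bar_mono: "x \<le> y \<Longrightarrow> Phi_bar y \<le> Phi_bar x"
  by (rule DERIV_nonpos_imp_nonincreasing) (auto intro!: exI DERIV_Phi_bar less_imp_le std_phi_pos)

lemma Phi_bar_pos: "Phi_bar x > 0"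
proof -
  have "Phi_bar (x+1) < Phi_bar x"
    by (rule DERIV_neg_imp_decreasing) (auto intro!: exI DERIV_Phi_bar std_phi_pos)
  with Phi_bar_nonneg[of "x+1"] show ?thesis by linarith
qed

lemma DERIV_std_phi: "DERIV std_phi x :> - x * std_phi x"
  unfolding std_phi_def
  by (auto intro!: derivative_eq_intros simp: field_simps power2_eq_square)

lemma Phi_bar_le: assumes "x > 0" shows "Phi_bar x \<le> std_phi x / x"
proof -
  let ?f = "\<lambda>s. s * std_phi s / x"
  let ?F = "\<lambda>s. - std_phi s / x"
  have F: "set_integrable lborel (einterval x \<infinity>) ?f" "(LBINT s=ereal x..\<infinity>. ?f s) = 0 - ?F x"
  proof -
    have D: "\<And>s. DERIV ?F s :> ?f s"
      using assms by (auto intro!: derivative_eq_intros DERIV_std_phi)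
    have C: "\<And>s. isCont ?f s"
      using assms by (auto intro!: continuous_intros isCont_std_phi)
    have N: "AE s in lborel. ereal x < ereal s \<longrightarrow> ereal s < \<infinity> \<longrightarrow> 0 \<le> ?f s"
      using assms by (auto intro!: AE_I2 divide_nonneg_pos mult_nonneg_nonneg less_imp_le[OF std_phi_pos])
    have A: "((?F \<circ> real_of_ereal) \<longlongrightarrow> ?F x) (at_right (ereal x))"
      unfolding ereal_tendsto_simps1
      using assms by (intro tendsto_intros isCont_tendsto_compose[OF isCont_std_phi] tendsto_ident_at) auto
    have B: "((?F \<circ> real_of_ereal) \<longlongrightarrow> 0) (at_left \<infinity>)"
      unfolding ereal_tendsto_simps1 std_phi_def using assms by real_asymp
    show "set_integrable lborel (einterval x \<infinity>) ?f" "(LBINT s=ereal x..\<infinity>. ?f s) = 0 - ?F x"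
      using interval_integral_FTC_nonneg[OF _ D C N A B] by auto
  qed
  have "Phi_bar x = (LINT s:einterval x \<infinity>|lborel. std_phi s)"
    by (simp add: Phi_bar_interval interval_lebesgue_integral_def)
  also have "\<dots> \<le> (LINT s:einterval x \<infinity>|lborel. ?f s)"
  proof (rule set_integral_mono[OF set_integrable_std_phi F(1)])
    fix s assume "s \<in> einterval (ereal x) \<infinity>"
    then have "x < s" by (simp add: einterval_iff)
    then show "std_phi s \<le> ?f s" using assms std_phi_pos[of s]
      by (simp add: field_simps)
  qed auto
  also have "\<dots> = std_phi x / x" using F(2) by (simp add: interval_lebesgue_integral_def)
  finally show ?thesis .
qed

lemma Phi_bar_tendsto: "(Phi_bar \<longlongrightarrow> 0) at_top"
proof (rule tendsto_sandwich[of "\<lambda>_. 0" _ _ "\<lambda>x. std_phi x / x"])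
  show "eventually (\<lambda>x. 0 \<le> Phi_bar x) at_top" by (simp add: Phi_bar_nonneg)
  show "eventually (\<lambda>x. Phi_bar x \<le> std_phi x / x) at_top"
    using eventually_gt_at_top[of 0] by eventually_elim (rule Phi_bar_le)
  show "((\<lambda>x. std_phi x / x) \<longlongrightarrow> 0) at_top" unfolding std_phi_def by real_asymp
qed simp


definition gg :: "real \<Rightarrow> real \<Rightarrow> real" where
  "gg u y = u * sqrt ((1 - y) / (1 + y))"

definition GG :: "real \<Rightarrow> real \<Rightarrow> real" where
  "GG u y = (if y \<le> -1 then 0 else Phi_bar (gg u y))"

definition GD :: "real \<Rightarrow> real \<Rightarrow> real" where
  "GD u y = std_phi (gg u y) * u / ((1 + y) * sqrt (1 - y\<^sup>2))"

lemma sqrt_frac_eq: assumes "-1 < y" shows "sqrt ((1 - y) / (1 + y)) = sqrt (1 - y\<^sup>2) / (1 + y)"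
proof -
  have "1 - y\<^sup>2 = (1 - y) * (1 + y)" by (simp add: algebra_simps power2_eq_square)
  then have "sqrt (1 - y\<^sup>2) = sqrt (1 - y) * sqrt (1 + y)" by (simp add: real_sqrt_mult)
  moreover have "sqrt (1 + y) * sqrt (1 + y) = 1 + y" using assms by simp
  ultimately show ?thesis using assms
    by (simp add: real_sqrt_divide field_simps)
qed

lemma DERIV_gg: assumes "-1 < y" "y < 1"
  shows "DERIV (gg u) y :> - u / ((1 + y) * sqrt (1 - y\<^sup>2))"
proof -
  have pos: "0 < (1 - y) / (1 + y)" using assms by simp
  have s1: "sqrt (1 - y\<^sup>2) > 0" using assms by (simp add: abs_square_less_1)
  have q: "DERIV (\<lambda>y. (1 - y) / (1 + y)) y :> -2 / (1 + y)\<^sup>2"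
    using assms by (auto intro!: derivative_eq_intros simp: field_simps power2_eq_square)
  have "DERIV (\<lambda>y. sqrt ((1 - y) / (1 + y))) y :> inverse (sqrt ((1 - y) / (1 + y))) / 2 * (-2 / (1 + y)\<^sup>2)"
    by (rule DERIV_chain2[OF DERIV_real_sqrt[OF pos] q])
  then have "DERIV (\<lambda>y. u * sqrt ((1 - y) / (1 + y))) y :> u * (inverse (sqrt ((1 - y) / (1 + y))) / 2 * (-2 / (1 + y)\<^sup>2))"
    by (rule DERIV_cmult)
  also have "u * (inverse (sqrt ((1 - y) / (1 + y))) / 2 * (-2 / (1 + y)\<^sup>2)) = - u / ((1 + y) * sqrt (1 - y\<^sup>2))"
  proof -
    have i: "inverse (sqrt ((1 - y) / (1 + y))) = (1 + y) / sqrt (1 - y\<^sup>2)"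
      using assms s1 by (simp add: sqrt_frac_eq)
    have "\<And>S t. S > 0 \<Longrightarrow> t > 0 \<Longrightarrow> u * (t / S / 2 * (-2 / t\<^sup>2)) = - u / (t * S)"
      by (simp add: field_simps power2_eq_square)
    from this[OF s1, of "1 + y"] assms show ?thesis unfolding i by simp
  qed
  finally show ?thesis unfolding gg_def[abs_def] .
qed

lemma DERIV_GG: assumes "-1 < y" "y < 1"
  shows "DERIV (GG u) y :> GD u y"
proof -
  have "DERIV (\<lambda>y. Phi_bar (gg u y)) y :> (- std_phi (gg u y)) * (- u / ((1 + y) * sqrt (1 - y\<^sup>2)))"
    by (rule DERIV_chain2[OF DERIV_Phi_bar DERIV_gg[OF assms]])
  then have "DERIV (\<lambda>y. Phi_bar (gg u y)) y :> GD u y"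
    by (simp add: GD_def)
  then show ?thesis
    by (rule has_field_derivative_transform_within_open[where S="{-1<..}"]) (use assms in \<open>auto simp: GG_def\<close>)
qed

lemma isCont_gg: "-1 < y \<Longrightarrow> isCont (gg u) y"
  unfolding gg_def by (intro continuous_intros) auto

lemma GG_tendsto: assumes "-1 < y" shows "(GG u \<longlongrightarrow> GG u y) (at y)"
proof -
  have "((\<lambda>z. Phi_bar (gg u z)) \<longlongrightarrow> Phi_bar (gg u y)) (at y)"
    by (intro isCont_tendsto_compose[OF isCont_Phi_bar] isCont_gg[OF assms, unfolded isCont_def])
  moreover have "eventually (\<lambda>z. Phi_bar (gg u z) = GG u z) (at y)"
    using eventually_at_topological[of _ y] assms
    by (auto simp: GG_def intro!: exI[of _ "{-1<..}"])
  ultimately show ?thesis using assms by (auto simp: GG_def intro: Lim_transform_eventually)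
qed

lemma GG_tendsto_m1: assumes "u > 0" shows "(GG u \<longlongrightarrow> 0) (at_right (-1))"
proof -
  have "filterlim (gg u) at_top (at_right (-1))"
    unfolding gg_def using assms by real_asymp
  then have "((\<lambda>z. Phi_bar (gg u z)) \<longlongrightarrow> 0) (at_right (-1))"
    by (rule filterlim_compose[OF Phi_bar_tendsto])
  moreover have "eventually (\<lambda>z. Phi_bar (gg u z) = GG u z) (at_right (-1))"
    by (auto simp: GG_def eventually_at_right_less intro!: eventually_mono[OF eventually_at_right_less[of "-1::real"]])
  ultimately show ?thesis by (auto intro: Lim_transform_eventually)
qed

lemma GG_nonneg: "GG u y \<ge> 0"
  by (simp add: GG_def Phi_bar_nonneg)

lemma GD_nonneg: assumes "u \<ge> 0" "-1 < y" "y < 1" shows "GD u y \<ge> 0"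
proof -
  have "sqrt (1 - y\<^sup>2) > 0" using assms by (simp add: abs_square_less_1)
  then show ?thesis using assms std_phi_pos[of "gg u y"] by (simp add: GD_def)
qed

lemma isCont_GD: assumes "-1 < y" "y < 1" shows "isCont (GD u) y"
proof -
  have "sqrt (1 - y\<^sup>2) > 0" using assms by (simp add: abs_square_less_1)
  then show ?thesis unfolding GD_def using assms
    by (intro continuous_intros isCont_o2[OF isCont_gg isCont_std_phi]) auto
qed

lemma phi2_eq: assumes "u > 0" "-1 < y" "y < 1"
  shows "phi2 u y = (std_phi u / u) * (1 + y) * GD u y"
proof -
  have s1: "sqrt (1 - y\<^sup>2) > 0" using assms by (simp add: abs_square_less_1)
  have g2: "(gg u y)\<^sup>2 = u\<^sup>2 * (1 - y) / (1 + y)"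
    using assms by (simp add: gg_def power_mult_distrib)
  have e: "exp (- (u\<^sup>2) / 2) * exp (- ((gg u y)\<^sup>2) / 2) = exp (- (u\<^sup>2) / (1 + y))"
    unfolding exp_add[symmetric] g2 using assms by (simp add: field_simps)
  have sp: "sqrt (2 * pi) * sqrt (2 * pi) = 2 * pi" by simp
  have a: "(1 + y) * GD u y = std_phi (gg u y) * u / sqrt (1 - y\<^sup>2)"
    using assms by (simp add: GD_def)
  have b0: "std_phi u * std_phi (gg u y) = exp (- (u\<^sup>2) / 2) * exp (- ((gg u y)\<^sup>2) / 2) / (sqrt (2 * pi) * sqrt (2 * pi))"
    unfolding std_phi_def by simp
  have b: "std_phi u * std_phi (gg u y) = exp (- (u\<^sup>2) / (1 + y)) / (2 * pi)"
    unfolding b0 e sp by simp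
  have "(std_phi u / u) * (1 + y) * GD u y = (std_phi u / u) * ((1 + y) * GD u y)" by simp
  also have "\<dots> = std_phi u * std_phi (gg u y) / sqrt (1 - y\<^sup>2)"
    unfolding a using assms by simp
  also have "\<dots> = phi2 u y" unfolding b phi2_def by simp
  finally show ?thesis by simp
qed

lemma phi2_nonneg: assumes "-1 \<le> y" "y \<le> 1" shows "phi2 u y \<ge> 0"
  using assms by (simp add: phi2_def abs_square_le_1)

lemma phi2_meas[measurable]: "phi2 u \<in> borel_measurable borel"
  unfolding phi2_def by measurable


lemma core:
  assumes u: "u > 0" and pq: "-1 \<le> p" "p < q" "q \<le> 1" and m: "0 \<le> m"
    and mM: "\<And>y. p < y \<Longrightarrow> y < q \<Longrightarrow> m \<le> 1 + y \<and> 1 + y \<le> M"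
  shows "set_integrable lborel (einterval p q) (phi2 u)"
    and "m * (std_phi u / u) * (GG u q - GG u p) \<le> (LBINT y=ereal p..ereal q. phi2 u y)"
    and "(LBINT y=ereal p..ereal q. phi2 u y) \<le> M * (std_phi u / u) * (GG u q - GG u p)"
proof -
  define c where "c = std_phi u / u"
  have c: "c > 0" using u std_phi_pos[of u] by (simp add: c_def)
  have A: "((GG u \<circ> real_of_ereal) \<longlongrightarrow> GG u p) (at_right (ereal p))"
    unfolding ereal_tendsto_simps1
  proof (cases "p = -1")
    case True then show "(GG u \<longlongrightarrow> GG u p) (at_right p)"
      using GG_tendsto_m1[OF u] by (simp add: GG_def)
  next
    case False then show "(GG u \<longlongrightarrow> GG u p) (at_right p)"
      using pq by (intro tendsto_within_subset[OF GG_tendsto]) auto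
  qed
  have B: "((GG u \<circ> real_of_ereal) \<longlongrightarrow> GG u q) (at_left (ereal q))"
    unfolding ereal_tendsto_simps1 using pq by (intro tendsto_within_subset[OF GG_tendsto]) auto
  have FTC: "set_integrable lborel (einterval p q) (GD u)"
       "(LBINT x=ereal p..ereal q. GD u x) = GG u q - GG u p"
  proof -
    have d: "\<And>x. ereal p < ereal x \<Longrightarrow> ereal x < ereal q \<Longrightarrow> DERIV (GG u) x :> GD u x"
      using pq by (auto intro!: DERIV_GG)
    have ct: "\<And>x. ereal p < ereal x \<Longrightarrow> ereal x < ereal q \<Longrightarrow> isCont (GD u) x"
      using pq by (auto intro!: isCont_GD)
    have nn: "AE x in lborel. ereal p < ereal x \<longrightarrow> ereal x < ereal q \<longrightarrow> 0 \<le> GD u x"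
      using pq u by (auto intro!: AE_I2 GD_nonneg)
    have pq': "ereal p < ereal q" using pq by simp
    show "set_integrable lborel (einterval p q) (GD u)"
       "(LBINT x=ereal p..ereal q. GD u x) = GG u q - GG u p"
      using interval_integral_FTC_nonneg[OF pq' d ct nn A B] by auto
  qed
  have eq: "\<And>y. y \<in> einterval p q \<Longrightarrow> phi2 u y = c * (1 + y) * GD u y"
  proof -
    fix y assume "y \<in> einterval p q"
    then have "-1 < y" "y < 1" using pq by (auto simp: einterval_iff)
    then show "phi2 u y = c * (1 + y) * GD u y" using phi2_eq[OF u] by (simp add: c_def)
  qed
  have gd0: "\<And>y. y \<in> einterval p q \<Longrightarrow> GD u y \<ge> 0"
    using pq u by (auto simp: einterval_iff intro!: GD_nonneg)
  have bnd: "\<And>y. y \<in> einterval p q \<Longrightarrow> m * c * GD u y \<le> phi2 u y \<and> phi2 u y \<le> M * c * GD u y"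
  proof -
    fix y assume y: "y \<in> einterval p q"
    then have "m \<le> 1 + y" "1 + y \<le> M" using mM by (auto simp: einterval_iff)
    then show "m * c * GD u y \<le> phi2 u y \<and> phi2 u y \<le> M * c * GD u y"
      unfolding eq[OF y] using c gd0[OF y]
      by (auto intro!: mult_right_mono simp: mult.commute mult.left_commute)
  qed
  have IM: "set_integrable lborel (einterval p q) (\<lambda>y. M * c * GD u y)"
    using FTC(1) by (intro set_integrable_mult_right) auto
  have Im: "set_integrable lborel (einterval p q) (\<lambda>y. m * c * GD u y)"
    using FTC(1) by (intro set_integrable_mult_right) auto
  show I: "set_integrable lborel (einterval p q) (phi2 u)"
  proof (rule set_integrable_bound[OF IM])
    show "set_borel_measurable lborel (einterval (ereal p) (ereal q)) (phi2 u)"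
      unfolding set_borel_measurable_def by measurable
    show "AE x in lborel. x \<in> einterval (ereal p) (ereal q) \<longrightarrow> norm (phi2 u x) \<le> norm (M * c * GD u x)"
    proof (rule AE_I2, rule impI)
      fix x assume x: "x \<in> einterval p q"
      have "0 \<le> m * c * GD u x" using m c gd0[OF x] by simp
      then show "norm (phi2 u x) \<le> norm (M * c * GD u x)" using bnd[OF x] by simp
    qed
  qed
  have LB: "(LBINT y=ereal p..ereal q. phi2 u y) = (LINT y:einterval p q|lborel. phi2 u y)"
    using pq by (simp add: interval_lebesgue_integral_def)
  have LG: "(LINT y:einterval p q|lborel. GD u y) = GG u q - GG u p"
    using FTC(2) pq by (simp add: interval_lebesgue_integral_def)
  have "(LINT y:einterval p q|lborel. m * c * GD u y) \<le> (LINT y:einterval p q|lborel. phi2 u y)"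
    by (rule set_integral_mono[OF Im I]) (use bnd in blast)
  then show "m * (std_phi u / u) * (GG u q - GG u p) \<le> (LBINT y=ereal p..ereal q. phi2 u y)"
    unfolding LB using LG by (simp add: c_def)
  have "(LINT y:einterval p q|lborel. phi2 u y) \<le> (LINT y:einterval p q|lborel. M * c * GD u y)"
    by (rule set_integral_mono[OF I IM]) (use bnd in blast)
  then show "(LBINT y=ereal p..ereal q. phi2 u y) \<le> M * (std_phi u / u) * (GG u q - GG u p)"
    unfolding LB using LG by (simp add: c_def)
qed


definition JJ :: "real \<Rightarrow> real \<Rightarrow> real" where
  "JJ u r = (LBINT y=ereal 0..ereal r. phi2 u y)"

lemma Phi_bar_sqrt_mono: assumes "u \<ge> 0" "A \<le> B" shows "Phi_bar (u * sqrt B) \<le> Phi_bar (u * sqrt A)"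
  using assms by (intro Phi_bar_mono mult_left_mono) auto

lemma phi2_interval_integrable:
  assumes u: "u > 0" and "-1 \<le> a" "a \<le> 1" "-1 \<le> b" "b \<le> 1"
  shows "interval_lebesgue_integrable lborel (ereal a) (ereal b) (phi2 u)"
proof -
  have I: "set_integrable lborel (einterval (ereal (-1)) (ereal 1)) (phi2 u)"
    using core(1)[OF u, of "-1" 1 0 2] by auto
  show ?thesis unfolding interval_lebesgue_integrable_def
    using assms by (auto intro!: set_integrable_subset[OF I] simp: einterval_iff)
qed

lemma phi2_interval_nonneg:
  assumes u: "u > 0" and "-1 \<le> a" "a \<le> b" "b \<le> 1"
  shows "(LBINT y=ereal a..ereal b. phi2 u y) \<ge> 0"
proof -
  have "(LBINT y=ereal a..ereal b. phi2 u y) = (LINT y:einterval a b|lborel. phi2 u y)"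
    using assms by (simp add: interval_lebesgue_integral_def)
  also have "\<dots> \<ge> 0" unfolding set_lebesgue_integral_def
    using assms by (intro integral_nonneg_AE AE_I2) (auto simp: einterval_iff indicator_def intro!: phi2_nonneg)
  finally show ?thesis .
qed

lemma JJ_split:
  assumes u: "u > 0" and "-1 \<le> r" "r \<le> 1" "-1 \<le> s" "s \<le> 1"
  shows "JJ u s = JJ u r + (LBINT y=ereal r..ereal s. phi2 u y)"
  unfolding JJ_def
  by (rule interval_integral_sum[symmetric])
     (use assms in \<open>auto intro!: phi2_interval_integrable simp: min_def max_def\<close>)

lemma JJ_mono:
  assumes u: "u > 0" and "-1 \<le> r" "r \<le> s" "s \<le> 1"
  shows "JJ u r \<le> JJ u s"
  using JJ_split[OF u, of r s] phi2_interval_nonneg[OF u, of r s] assms by auto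

lemma JJ_0[simp]: "JJ u 0 = 0"
  by (simp add: JJ_def zero_ereal_def[symmetric])

lemma GG_0: "GG u 0 = Phi_bar u"
  by (simp add: GG_def gg_def)

lemma JJ_upper:
  assumes u: "u > 0" and r: "-1 \<le> r" "r \<le> 1"
  shows "JJ u r \<le> 2 * (std_phi u / u) * Phi_bar (u * sqrt ((1 - r) / 2))"
proof -
  have c: "std_phi u / u > 0" using u std_phi_pos[of u] by simp
  have R: "0 \<le> 2 * (std_phi u / u) * Phi_bar (u * sqrt ((1 - r) / 2))"
    using c Phi_bar_nonneg by (intro mult_nonneg_nonneg) auto
  show ?thesis
  proof (cases "r \<le> 0")
    case True
    then have "JJ u r \<le> JJ u 0" using JJ_mono[OF u r(1) True] by simp
    then show ?thesis using R by simp
  next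
    case False
    then have "JJ u r \<le> 2 * (std_phi u / u) * (GG u r - GG u 0)"
      using core(3)[OF u, of 0 r 0 2] r by (simp add: JJ_def)
    also have "\<dots> \<le> 2 * (std_phi u / u) * GG u r"
      using c GG_nonneg[of u 0] by (intro mult_left_mono) auto
    finally have h1: "JJ u r \<le> 2 * (std_phi u / u) * GG u r" .
    have "GG u r = Phi_bar (u * sqrt ((1 - r) / (1 + r)))"
      using False by (simp add: GG_def gg_def)
    also have "\<dots> \<le> Phi_bar (u * sqrt ((1 - r) / 2))"
      using u r False by (intro Phi_bar_sqrt_mono divide_left_mono) auto
    finally have "2 * (std_phi u / u) * GG u r \<le> 2 * (std_phi u / u) * Phi_bar (u * sqrt ((1 - r) / 2))"
      using c by (intro mult_left_mono) auto
    with h1 show ?thesis by linarith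
  qed
qed

lemma JJ_lower:
  assumes u: "u > 0" and r: "-1 \<le> r" "r \<le> 1" and a: "0 < a" "a < 1"
    and k: "0 < k" "k \<le> 1 + a"
  shows "JJ u r \<ge> (1 + a) * (std_phi u / u) * (Phi_bar (u * sqrt ((1 - r) / k)) - Phi_bar (gg u a))
                    - (std_phi u / u) * Phi_bar u"
proof -
  define c where "c = std_phi u / u"
  have c: "c > 0" using u std_phi_pos[of u] by (simp add: c_def)
  have pb: "Phi_bar u \<ge> 0" by (rule Phi_bar_nonneg)
  have cp: "c * Phi_bar u \<ge> 0" using c pb by simp
  have ga: "gg u a = u * sqrt ((1 - a) / (1 + a))" by (simp add: gg_def)
  have small: "Phi_bar (u * sqrt ((1 - r) / k)) \<le> Phi_bar (gg u a)" if "r \<le> a"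
  proof -
    have "(1 - a) / (1 + a) \<le> (1 - r) / (1 + a)" using that a by (intro divide_right_mono) auto
    also have "\<dots> \<le> (1 - r) / k" using that a k by (intro divide_left_mono) auto
    finally show ?thesis unfolding ga using u by (intro Phi_bar_sqrt_mono) auto
  qed
  consider "r < 0" | "0 \<le> r" "r \<le> a" | "a < r" by linarith
  then show ?thesis
  proof cases
    case 1
    have "JJ u 0 = JJ u r + (LBINT y=ereal r..ereal 0. phi2 u y)"
      using JJ_split[OF u r, of 0] by simp
    moreover have "(LBINT y=ereal r..ereal 0. phi2 u y) \<le> 1 * c * (GG u 0 - GG u r)"
    proof -
      have "\<And>y. r < y \<Longrightarrow> y < 0 \<Longrightarrow> 0 \<le> 1 + y \<and> 1 + y \<le> 1" using r by auto
      from core(3)[OF u r(1) 1 _ _ this] show ?thesis by (simp add: c_def)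
    qed
    moreover have "1 * c * (GG u 0 - GG u r) \<le> c * Phi_bar u"
      using c GG_nonneg[of u r] by (simp add: GG_0 right_diff_distrib)
    ultimately have "JJ u r \<ge> - c * Phi_bar u" by simp
    moreover have "(1 + a) * c * (Phi_bar (u * sqrt ((1 - r) / k)) - Phi_bar (gg u a)) \<le> 0"
      using small 1 a c by (intro mult_nonneg_nonpos) auto
    ultimately show ?thesis by (simp add: c_def)
  next
    case 2
    have "JJ u r \<ge> 0" using JJ_mono[OF u, of 0 r] 2 a by simp
    moreover have "(1 + a) * c * (Phi_bar (u * sqrt ((1 - r) / k)) - Phi_bar (gg u a)) \<le> 0"
      using small 2 a c by (intro mult_nonneg_nonpos) auto
    ultimately show ?thesis unfolding c_def[symmetric] using cp by linarith
  next
    case 3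
    have "JJ u r = JJ u a + (LBINT y=ereal a..ereal r. phi2 u y)"
      using JJ_split[OF u, of a r] a r by simp
    moreover have "JJ u a \<ge> 0" using JJ_mono[OF u, of 0 a] a by simp
    moreover have "(LBINT y=ereal a..ereal r. phi2 u y) \<ge> (1 + a) * c * (GG u r - GG u a)"
      using core(2)[OF u _ 3 r(2), of "1 + a" 2] a r by (simp add: c_def)
    moreover have "GG u a = Phi_bar (gg u a)" using a by (simp add: GG_def)
    moreover have "GG u r \<ge> Phi_bar (u * sqrt ((1 - r) / k))"
    proof -
      have "(1 - r) / (1 + r) \<le> (1 - r) / k" using 3 k r by (intro divide_left_mono) auto
      then show ?thesis using 3 a u by (simp add: GG_def gg_def Phi_bar_sqrt_mono)
    qed
    ultimately have "JJ u r \<ge> (1 + a) * c * (Phi_bar (u * sqrt ((1 - r) / k)) - Phi_bar (gg u a))"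
      using c a by (smt (verit) mult_left_mono mult_pos_pos)
    then show ?thesis unfolding c_def[symmetric] using cp by linarith
  qed
qed


lemma gaussian_rv_meas: "gaussian_rv M Y \<Longrightarrow> Y \<in> borel_measurable M"
  unfolding gaussian_rv_def by (auto dest: distributed_measurable)

lemma field_facts:
  assumes field: "stationary_gaussian_field M X \<rho>"
  shows "\<bar>\<rho> t\<bar> \<le> 1" and "\<rho> 0 = 1"
proof -
  have ps: "prob_space M" and g: "\<And>S a. finite S \<Longrightarrow> gaussian_rv M (\<lambda>\<omega>. \<Sum>t\<in>S. a t * X t \<omega>)"
    and sq: "\<And>t. integral\<^sup>L M (\<lambda>\<omega>. (X t \<omega>)\<^sup>2) = 1"
    and cov: "\<And>s t. integral\<^sup>L M (\<lambda>\<omega>. X s \<omega> * X t \<omega>) = \<rho> (s - t)"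
    using field unfolding stationary_gaussian_field_def by auto
  have meas[measurable]: "\<And>t. X t \<in> borel_measurable M"
  proof -
    fix t
    have "gaussian_rv M (\<lambda>\<omega>. \<Sum>s\<in>{t}. (\<lambda>_. 1) s * X s \<omega>)" by (rule g) simp
    then show "X t \<in> borel_measurable M" by (simp add: gaussian_rv_meas)
  qed
  have isq: "\<And>t. integrable M (\<lambda>\<omega>. (X t \<omega>)\<^sup>2)"
    using sq not_integrable_integral_eq by (metis zero_neq_one)
  have iprod: "\<And>s t. integrable M (\<lambda>\<omega>. X s \<omega> * X t \<omega>)"
  proof -
    fix s t
    show "integrable M (\<lambda>\<omega>. X s \<omega> * X t \<omega>)"
    proof (rule Bochner_Integration.integrable_bound[OF Bochner_Integration.integrable_add[OF isq[of s] isq[of t]]])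
      show "AE x in M. norm (X s x * X t x) \<le> norm ((X s x)\<^sup>2 + (X t x)\<^sup>2)"
      proof (rule AE_I2)
        fix x
        have "0 \<le> (\<bar>X s x\<bar> - \<bar>X t x\<bar>)\<^sup>2" by simp
        then have "2 * \<bar>X s x\<bar> * \<bar>X t x\<bar> \<le> (X s x)\<^sup>2 + (X t x)\<^sup>2"
          by (simp add: power2_eq_square algebra_simps)
        moreover have "0 \<le> \<bar>X s x\<bar> * \<bar>X t x\<bar>" by simp
        ultimately have "\<bar>X s x\<bar> * \<bar>X t x\<bar> \<le> (X s x)\<^sup>2 + (X t x)\<^sup>2" by linarith
        then show "norm (X s x * X t x) \<le> norm ((X s x)\<^sup>2 + (X t x)\<^sup>2)"
          by (simp add: abs_mult)
      qed
    qed measurable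
  qed
  have key: "\<And>s t e. e = 1 \<or> e = -1 \<Longrightarrow> 0 \<le> 2 + 2 * e * \<rho> (s - t)"
  proof -
    fix s t and e :: real assume e: "e = 1 \<or> e = -1"
    have "0 \<le> integral\<^sup>L M (\<lambda>\<omega>. (X s \<omega> + e * X t \<omega>)\<^sup>2)"
      by (rule integral_nonneg_AE) simp
    also have "(\<lambda>\<omega>. (X s \<omega> + e * X t \<omega>)\<^sup>2) = (\<lambda>\<omega>. ((X s \<omega>)\<^sup>2 + (X t \<omega>)\<^sup>2) + (2 * e) * (X s \<omega> * X t \<omega>))"
      using e by (auto simp: power2_eq_square algebra_simps)
    also have "integral\<^sup>L M \<dots> = 2 + 2 * e * \<rho> (s - t)"
      using isq iprod sq cov by (simp add: integral_add integral_mult_right)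
    finally show "0 \<le> 2 + 2 * e * \<rho> (s - t)" .
  qed
  from key[of 1 t 0] key[of "-1" t 0] show "\<bar>\<rho> t\<bar> \<le> 1" by auto
  have "(\<lambda>\<omega>. X 0 \<omega> * X 0 \<omega>) = (\<lambda>\<omega>. (X 0 \<omega>)\<^sup>2)" by (simp add: power2_eq_square)
  then show "\<rho> 0 = 1" using cov[of 0 0] sq[of 0] by simp
qed

lemma set_integrable_cbox_bounded:
  fixes f :: "'d::euclidean_space \<Rightarrow> real"
  assumes "f \<in> borel_measurable lborel" "\<And>x. x \<in> cbox a b \<Longrightarrow> \<bar>f x\<bar> \<le> B"
  shows "set_integrable lborel (cbox a b) f"
  unfolding set_integrable_def
  by (rule integrableI_bounded_set_indicator[where B=B]) (use assms emeasure_lborel_cbox_finite[of a b] in auto)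


lemma JJ_rho_meas:
  fixes \<rho> :: "'d::euclidean_space \<Rightarrow> real"
  assumes u: "u > 0" and [measurable]: "\<rho> \<in> borel_measurable lborel" and r: "\<And>t. \<bar>\<rho> t\<bar> \<le> 1"
  shows "(\<lambda>t. JJ u (\<rho> t)) \<in> borel_measurable lborel"
proof -
  define h where "h r = JJ u (max (-1) (min 1 r))" for r
  have "mono h" unfolding h_def mono_def by (auto intro!: JJ_mono[OF u])
  then have [measurable]: "h \<in> borel_measurable borel" by (rule borel_measurable_mono)
  have "(\<lambda>t. h (\<rho> t)) \<in> borel_measurable lborel" by measurable
  moreover have "\<And>t. h (\<rho> t) = JJ u (\<rho> t)" using r unfolding h_def
    by (metis abs_le_iff max.absorb2 min.absorb2 minus_le_iff)
  ultimately show ?thesis by simp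
qed

lemma JJ_bound: assumes u: "u > 0" "\<bar>r\<bar> \<le> 1" shows "\<bar>JJ u r\<bar> \<le> \<bar>JJ u (-1)\<bar> + \<bar>JJ u 1\<bar>"
proof -
  have "JJ u (-1) \<le> JJ u r" "JJ u r \<le> JJ u 1"
    using JJ_mono[OF u(1), of "-1" r] JJ_mono[OF u(1), of r 1] u(2) by (auto simp: abs_le_iff)
  then show ?thesis by linarith
qed

lemma JJ_rho_integrable:
  fixes \<rho> :: "'d::euclidean_space \<Rightarrow> real"
  assumes u: "u > 0" and [measurable]: "\<rho> \<in> borel_measurable lborel" and r: "\<And>t. \<bar>\<rho> t\<bar> \<le> 1"
  shows "set_integrable lborel (cbox a b) (\<lambda>t. JJ u (\<rho> t))"
  by (rule set_integrable_cbox_bounded[OF JJ_rho_meas[OF u _ r]]) (use JJ_bound[OF u r] in auto)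

lemma Phi_rho_integrable:
  fixes \<rho> :: "'d::euclidean_space \<Rightarrow> real"
  assumes u: "u \<ge> 0" "k > 0" and [measurable]: "\<rho> \<in> borel_measurable lborel" and r: "\<And>t. \<bar>\<rho> t\<bar> \<le> 1"
  shows "set_integrable lborel (cbox a b) (\<lambda>t. Phi_bar (u * sqrt ((1 - \<rho> t) / k)))"
proof (rule set_integrable_cbox_bounded[where B="Phi_bar 0"])
  show "(\<lambda>t. Phi_bar (u * sqrt ((1 - \<rho> t) / k))) \<in> borel_measurable lborel" by measurable
  fix t
  have "0 \<le> u * sqrt ((1 - \<rho> t) / k)" using u r[of t] by auto
  then show "\<bar>Phi_bar (u * sqrt ((1 - \<rho> t) / k))\<bar> \<le> Phi_bar 0"
    using Phi_bar_nonneg Phi_bar_mono by (simp add: abs_of_nonneg)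
qed

lemma cube_upper:
  fixes \<rho> :: "'d::euclidean_space \<Rightarrow> real"
  assumes u: "u > 0" and [measurable]: "\<rho> \<in> borel_measurable lborel" and r: "\<And>t. \<bar>\<rho> t\<bar> \<le> 1"
  shows "(LINT t:cbox a b|lborel. JJ u (\<rho> t)) \<le>
           2 * (std_phi u / u) * (LINT t:cbox a b|lborel. Phi_bar (u * sqrt ((1 - \<rho> t) / 2)))"
proof -
  have "(LINT t:cbox a b|lborel. JJ u (\<rho> t)) \<le>
        (LINT t:cbox a b|lborel. 2 * (std_phi u / u) * Phi_bar (u * sqrt ((1 - \<rho> t) / 2)))"
    using r u
    by (intro set_integral_mono JJ_rho_integrable set_integrable_mult_right Phi_rho_integrable JJ_upper)
       (auto simp: abs_le_iff)
  then show ?thesis by simp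
qed

lemma cube_lower:
  fixes \<rho> :: "'d::euclidean_space \<Rightarrow> real"
  assumes u: "u > 0" and [measurable]: "\<rho> \<in> borel_measurable lborel" and r: "\<And>t. \<bar>\<rho> t\<bar> \<le> 1"
    and a: "0 < a" "a < 1" and k: "0 < k" "k \<le> 1 + a"
  shows "(LINT t:cbox x y|lborel. JJ u (\<rho> t)) \<ge>
           (1 + a) * (std_phi u / u) * (LINT t:cbox x y|lborel. Phi_bar (u * sqrt ((1 - \<rho> t) / k)))
           - measure lborel (cbox x y) * ((1 + a) * (std_phi u / u) * Phi_bar (gg u a) + (std_phi u / u) * Phi_bar u)"
proof -
  define c where "c = std_phi u / u"
  define e where "e = (1 + a) * c * Phi_bar (gg u a) + c * Phi_bar u"
  have IP: "set_integrable lborel (cbox x y) (\<lambda>t. Phi_bar (u * sqrt ((1 - \<rho> t) / k)))"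
    using u k r by (intro Phi_rho_integrable) auto
  have IC: "set_integrable lborel (cbox x y) (\<lambda>t. e)"
    by (rule set_integrable_cbox_bounded[where B="\<bar>e\<bar>"]) auto
  have I1: "set_integrable lborel (cbox x y) (\<lambda>t. (1 + a) * c * Phi_bar (u * sqrt ((1 - \<rho> t) / k)))"
    using IP by (intro set_integrable_mult_right) auto
  have "(LINT t:cbox x y|lborel. (1 + a) * c * Phi_bar (u * sqrt ((1 - \<rho> t) / k)) - e)
        \<le> (LINT t:cbox x y|lborel. JJ u (\<rho> t))"
  proof (rule set_integral_mono)
    show "set_integrable lborel (cbox x y) (\<lambda>t. (1 + a) * c * Phi_bar (u * sqrt ((1 - \<rho> t) / k)) - e)"
      using I1 IC by (rule set_integral_diff(1))
    show "set_integrable lborel (cbox x y) (\<lambda>t. JJ u (\<rho> t))"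
      using u r by (intro JJ_rho_integrable) auto
    fix t
    have "JJ u (\<rho> t) \<ge> (1 + a) * c * (Phi_bar (u * sqrt ((1 - \<rho> t) / k)) - Phi_bar (gg u a)) - c * Phi_bar u"
      unfolding c_def using JJ_lower[OF u _ _ a k, of "\<rho> t"] r[of t] by (auto simp: abs_le_iff)
    then show "(1 + a) * c * Phi_bar (u * sqrt ((1 - \<rho> t) / k)) - e \<le> JJ u (\<rho> t)"
      unfolding e_def by (simp add: algebra_simps)
  qed
  also have "(LINT t:cbox x y|lborel. (1 + a) * c * Phi_bar (u * sqrt ((1 - \<rho> t) / k)) - e)
      = (1 + a) * c * (LINT t:cbox x y|lborel. Phi_bar (u * sqrt ((1 - \<rho> t) / k))) - measure lborel (cbox x y) * e"
    using set_integral_diff(2)[OF I1 IC] set_integral_const[of "cbox x y" lborel e] emeasure_lborel_cbox_finite[of x y]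
    by simp
  finally show ?thesis unfolding e_def c_def by (simp add: algebra_simps)
qed


lemma local_bound:
  fixes \<rho> :: "'d::euclidean_space \<Rightarrow> real"
  assumes local: "(\<lambda>t. 1 - \<rho> t) \<sim>[at 0] (\<lambda>t. c * norm t powr \<alpha>)"
    and r0: "\<rho> 0 = 1" and c: "c > 0" and al: "\<alpha> > 0"
  shows "\<exists>d>0. \<forall>t. norm t < d \<longrightarrow> 1 - \<rho> t \<le> 2 * c * norm t powr \<alpha>"
proof -
  have ne: "eventually (\<lambda>t::'d. t \<noteq> 0) (at 0)"
    unfolding eventually_at by (auto intro!: exI[of _ 1])
  have ev: "eventually (\<lambda>t. 1 - \<rho> t \<noteq> 0 \<or> c * norm t powr \<alpha> \<noteq> 0) (at 0)"
    using ne by eventually_elim (use c in auto)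
  have "((\<lambda>t. (1 - \<rho> t) / (c * norm t powr \<alpha>)) \<longlongrightarrow> 1) (at 0)"
    by (rule asymp_equivD_strong[OF local ev])
  from order_tendstoD(2)[OF this, of 2]
  have "eventually (\<lambda>t. (1 - \<rho> t) / (c * norm t powr \<alpha>) < 2) (at 0)" by simp
  then have "eventually (\<lambda>t. 1 - \<rho> t \<le> 2 * c * norm t powr \<alpha>) (at 0)"
    using ne
  proof eventually_elim
    case (elim t)
    then have "c * norm t powr \<alpha> > 0" using c by simp
    with elim show ?case by (simp add: divide_less_eq)
  qed
  then obtain d where d: "d > 0" "\<And>t. t \<noteq> 0 \<Longrightarrow> dist t 0 < d \<Longrightarrow> 1 - \<rho> t \<le> 2 * c * norm t powr \<alpha>"
    unfolding eventually_at by auto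
  show ?thesis
  proof (intro exI[of _ d] conjI allI impI)
    fix t :: 'd assume "norm t < d"
    then show "1 - \<rho> t \<le> 2 * c * norm t powr \<alpha>"
      using d r0 by (cases "t = 0") auto
  qed (rule d)
qed

lemma cube_norm:
  fixes t :: "'d::euclidean_space" and h :: real
  assumes "t \<in> cbox (- h *\<^sub>R One) (h *\<^sub>R One)"
  shows "norm t \<le> real DIM('d) * h"
proof -
  have "norm t \<le> (\<Sum>b\<in>Basis. \<bar>t \<bullet> b\<bar>)" by (rule norm_le_l1)
  also have "\<dots> \<le> (\<Sum>b\<in>(Basis::'d set). h)"
  proof (rule sum_mono)
    fix b :: 'd assume b: "b \<in> Basis"
    then show "\<bar>t \<bullet> b\<bar> \<le> h" using assms by (auto simp: mem_box inner_sum_left inner_Basis)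
  qed
  finally show ?thesis by simp
qed

lemma cube_measure:
  fixes h :: real
  assumes "h \<ge> 0"
  shows "measure lborel (cbox (- h *\<^sub>R One) (h *\<^sub>R (One::'d::euclidean_space))) = (2 * h) ^ DIM('d)"
proof -
  have "\<And>b::'d. b \<in> Basis \<Longrightarrow> (h *\<^sub>R One - (- h *\<^sub>R One)) \<bullet> b = 2 * h"
    by (simp add: inner_diff_left inner_add_left inner_sum_left inner_Basis)
  then have "(\<Prod>b\<in>(Basis::'d set). (h *\<^sub>R One - (- h *\<^sub>R One)) \<bullet> b) = (\<Prod>b\<in>(Basis::'d set). 2 * h)"
    by (rule prod.cong[OF refl])
  then show ?thesis using assms by (subst measure_lborel_cbox) auto
qed


lemma Dk_lower:
  fixes \<rho> :: "'d::euclidean_space \<Rightarrow> real"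
  assumes [measurable]: "\<rho> \<in> borel_measurable lborel" and r: "\<And>t. \<bar>\<rho> t\<bar> \<le> 1"
    and local: "(\<lambda>t. 1 - \<rho> t) \<sim>[at 0] (\<lambda>t. c * norm t powr \<alpha>)"
    and r0: "\<rho> 0 = 1" and c: "c > 0" and al: "\<alpha> > 0" and eps: "\<epsilon> > 0" and k: "k > 0"
  shows "\<exists>P>0. eventually (\<lambda>u. (LINT t:cbox (- \<epsilon> *\<^sub>R One) (\<epsilon> *\<^sub>R One)|lborel. Phi_bar (u * sqrt ((1 - \<rho> t) / k)))
             \<ge> P * (2 * u powr (-2/\<alpha>)) ^ DIM('d)) at_top"
proof -
  obtain d where d: "d > 0" "\<And>t. norm t < d \<Longrightarrow> 1 - \<rho> t \<le> 2 * c * norm t powr \<alpha>"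
    using local_bound[OF local r0 c al] by blast
  define n where "n = real DIM('d)"
  have n: "n \<ge> 1" unfolding n_def by (simp add: DIM_positive Suc_le_eq)
  define Q where "Q = 2 * c * n powr \<alpha> / k"
  define P where "P = Phi_bar (sqrt Q)"
  have P: "P > 0" unfolding P_def by (rule Phi_bar_pos)
  have lim: "((\<lambda>u::real. u powr (-2/\<alpha>)) \<longlongrightarrow> 0) at_top"
    using al by (intro tendsto_neg_powr filterlim_ident) simp
  have ev1: "eventually (\<lambda>u. u powr (-2/\<alpha>) < \<epsilon>) at_top" using order_tendstoD(2)[OF lim eps] .
  have ev2: "eventually (\<lambda>u. u powr (-2/\<alpha>) < d / n) at_top"
    using order_tendstoD(2)[OF lim] d n by simp
  have "eventually (\<lambda>u. (LINT t:cbox (- \<epsilon> *\<^sub>R One) (\<epsilon> *\<^sub>R One)|lborel. Phi_bar (u * sqrt ((1 - \<rho> t) / k)))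
             \<ge> P * (2 * u powr (-2/\<alpha>)) ^ DIM('d)) at_top"
    using ev1 ev2 eventually_gt_at_top[of 0]
  proof eventually_elim
    case (elim u)
    define h where "h = u powr (-2/\<alpha>)"
    have h: "0 < h" "h < \<epsilon>" "n * h < d" using elim n by (auto simp: h_def field_simps)
    define S where "S = cbox (- h *\<^sub>R One) (h *\<^sub>R (One::'d))"
    define C where "C = cbox (- \<epsilon> *\<^sub>R One) (\<epsilon> *\<^sub>R (One::'d))"
    have SC: "S \<subseteq> C" unfolding S_def C_def using h
      by (intro subset_box_imp) (auto simp: inner_add_left inner_sum_left inner_Basis)
    have hu: "h powr \<alpha> * u\<^sup>2 = 1"
    proof -
      have "h powr \<alpha> = u powr (-2)" using al by (simp add: h_def powr_powr)
      then show ?thesis using elim by (simp add: powr_minus power2_eq_square divide_simps powr_realpow[symmetric] powr_add[symmetric])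
    qed
    have bnd: "P \<le> Phi_bar (u * sqrt ((1 - \<rho> t) / k))" if t: "t \<in> S" for t
    proof -
      have nt: "norm t \<le> n * h" using cube_norm[of t h] t unfolding S_def n_def by simp
      then have "1 - \<rho> t \<le> 2 * c * norm t powr \<alpha>" using d h by simp
      also have "\<dots> \<le> 2 * c * (n * h) powr \<alpha>"
        using nt c al by (intro mult_left_mono powr_mono2) auto
      also have "\<dots> = 2 * c * n powr \<alpha> * h powr \<alpha>" using n h by (simp add: powr_mult)
      finally have "u\<^sup>2 * (1 - \<rho> t) \<le> u\<^sup>2 * (2 * c * n powr \<alpha> * h powr \<alpha>)"
        by (intro mult_left_mono) auto
      also have "\<dots> = 2 * c * n powr \<alpha>" using hu by (simp add: algebra_simps)
      finally have "(u\<^sup>2 * (1 - \<rho> t)) / k \<le> (2 * c * n powr \<alpha>) / k"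
        using k by (intro divide_right_mono) auto
      then have "u\<^sup>2 * ((1 - \<rho> t) / k) \<le> Q" unfolding Q_def by simp
      then have "sqrt (u\<^sup>2 * ((1 - \<rho> t) / k)) \<le> sqrt Q" by (rule real_sqrt_le_mono)
      moreover have "sqrt (u\<^sup>2 * ((1 - \<rho> t) / k)) = u * sqrt ((1 - \<rho> t) / k)"
        using elim by (subst real_sqrt_mult) simp
      ultimately have "u * sqrt ((1 - \<rho> t) / k) \<le> sqrt Q" by metis
      then show ?thesis unfolding P_def by (rule Phi_bar_mono)
    qed
    have IS: "set_integrable lborel C (\<lambda>t. indicator S t * P)"
      unfolding C_def by (rule set_integrable_cbox_bounded[where B=P]) (use P S_def in \<open>auto simp: indicator_def\<close>)
    have IF: "set_integrable lborel C (\<lambda>t. Phi_bar (u * sqrt ((1 - \<rho> t) / k)))"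
      unfolding C_def using elim k r by (intro Phi_rho_integrable) auto
    have le: "(LINT t:C|lborel. indicator S t * P) \<le> (LINT t:C|lborel. Phi_bar (u * sqrt ((1 - \<rho> t) / k)))"
      by (rule set_integral_mono[OF IS IF]) (auto simp: indicator_def Phi_bar_nonneg bnd)
    have eq1: "(LINT t:C|lborel. indicator S t * P) = P * measure lborel S"
    proof -
      have "(\<lambda>t. indicator C t *\<^sub>R (indicator S t * P)) = (\<lambda>t. P * indicator S t)"
        using SC by (auto simp: indicator_def fun_eq_iff)
      then show ?thesis unfolding set_lebesgue_integral_def by simp
    qed
    have eq2: "measure lborel S = (2 * h) ^ DIM('d)"
      unfolding S_def using h by (intro cube_measure) auto
    have "P * (2 * h) ^ DIM('d) \<le> (LINT t:C|lborel. Phi_bar (u * sqrt ((1 - \<rho> t) / k)))"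
      using le eq1 eq2 by metis
    then show ?case unfolding C_def h_def .
  qed
  with P show ?thesis by blast
qed


lemma pow_powr_aux: assumes "u > 0" shows "(2 * u powr s) ^ n = 2 ^ n * u powr (s * real n)"
proof -
  have "(u powr s) ^ n = u powr (s * real n)"
    using assms by (simp add: powr_realpow[symmetric] powr_powr)
  then show ?thesis by (simp add: power_mult_distrib)
qed

theorem lemma6:
  fixes M :: "'w measure" and X :: "'d::euclidean_space \<Rightarrow> 'w \<Rightarrow> real"
    and \<rho> :: "'d \<Rightarrow> real" and B :: "real \<Rightarrow> real"
    and \<alpha> c \<epsilon> \<delta> :: real
  assumes field: "stationary_gaussian_field M X \<rho>"
    and integrable: "integrable lborel \<rho>"
    and alpha: "0 < \<alpha>" "\<alpha> \<le> 2" and c: "0 < c"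
    and local: "(\<lambda>t. 1 - \<rho> t) \<sim>[at 0] (\<lambda>t. c * norm t powr \<alpha>)"
    and eps: "0 < \<epsilon>"
    and B: "B \<sim>[at_top] (\<lambda>u. LINT t:cbox (- \<epsilon> *\<^sub>R One) (\<epsilon> *\<^sub>R One)|lborel.
                                 (LBINT y=0..\<rho> t. phi2 u y))"
    and delta: "0 < \<delta>" "\<delta> < 1"
  shows "(Limsup at_top (\<lambda>u. ereal (B u /
            (2 * sqrt (2 / (2 - \<delta>)) * (std_phi u / u) *
             (LINT t:cbox (- \<epsilon> *\<^sub>R One) (\<epsilon> *\<^sub>R One)|lborel.
                Phi_bar (u * sqrt ((1 - \<rho> t) / 2)))))) \<le> 1) \<and>
         (Liminf at_top (\<lambda>u. ereal (B u /
            (sqrt (2 * (2 - \<delta>)) * (std_phi u / u) *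
             (LINT t:cbox (- \<epsilon> *\<^sub>R One) (\<epsilon> *\<^sub>R One)|lborel.
                Phi_bar (u * sqrt ((1 - \<rho> t) / (2 - \<delta>))))))) \<ge> 1)"
proof -
  have r: "\<And>t. \<bar>\<rho> t\<bar> \<le> 1" and r0: "\<rho> 0 = 1" using field_facts[OF field] by auto
  have meas[measurable]: "\<rho> \<in> borel_measurable lborel" using integrable by (rule borel_measurable_integrable)
  define I where "I u = (LINT t:cbox (- \<epsilon> *\<^sub>R One) (\<epsilon> *\<^sub>R One)|lborel. JJ u (\<rho> t))" for u
  have IB: "(\<lambda>u. LINT t:cbox (- \<epsilon> *\<^sub>R One) (\<epsilon> *\<^sub>R One)|lborel. (LBINT y=0..\<rho> t. phi2 u y)) = I"
    by (rule ext) (simp add: I_def JJ_def zero_ereal_def)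
  have BI: "B \<sim>[at_top] I" using B unfolding IB .
  define D1 where "D1 u = (LINT t:cbox (- \<epsilon> *\<^sub>R One) (\<epsilon> *\<^sub>R One)|lborel. Phi_bar (u * sqrt ((1 - \<rho> t) / 2)))" for u
  define D2 where "D2 u = (LINT t:cbox (- \<epsilon> *\<^sub>R One) (\<epsilon> *\<^sub>R One)|lborel. Phi_bar (u * sqrt ((1 - \<rho> t) / (2 - \<delta>))))" for u
  define R where "R u = (if B u = 0 \<and> I u = 0 then 1 else B u / I u)" for u
  have Rlim: "(R \<longlongrightarrow> 1) at_top" using asymp_equivD[OF BI] unfolding R_def .
  have sgn: "eventually (\<lambda>u. sgn (B u) = sgn (I u)) at_top"
    by (rule asymp_equiv_imp_eventually_same_sign[OF BI])
  define n where "n = DIM('d)"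
  have powpos: "\<And>u. u > 0 \<Longrightarrow> (2 * u powr (-2/\<alpha>)) ^ n > 0" by simp
  obtain P1 where P1: "P1 > 0" and evD1: "eventually (\<lambda>u. D1 u \<ge> P1 * (2 * u powr (-2/\<alpha>)) ^ n) at_top"
    using Dk_lower[OF meas r local r0 c alpha(1) eps, of 2] unfolding D1_def n_def by auto
  define K1 where "K1 = 2 * sqrt (2 / (2 - \<delta>))"
  have K1: "K1 / 2 > 1" using delta by (simp add: K1_def)
  have part1: "eventually (\<lambda>u. ereal (B u / (K1 * (std_phi u / u) * D1 u)) \<le> 1) at_top"
    using evD1 sgn order_tendstoD(2)[OF Rlim K1] eventually_gt_at_top[of 0]
  proof eventually_elim
    case (elim u)
    have c0: "std_phi u / u > 0" using elim std_phi_pos[of u] by simp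
    have D1p: "D1 u > 0" using elim(1) mult_pos_pos[OF P1 powpos[OF elim(4)]] by linarith
    have den: "K1 * (std_phi u / u) * D1 u > 0" using K1 c0 D1p by (intro mult_pos_pos) auto
    have up: "I u \<le> 2 * (std_phi u / u) * D1 u"
      unfolding I_def D1_def using elim r by (intro cube_upper) auto
    show ?case
    proof (cases "I u > 0")
      case True
      then have "R u = B u / I u" by (simp add: R_def)
      then have "B u = R u * I u" using True by simp
      also have "\<dots> \<le> K1 / 2 * I u" using elim True by (intro mult_right_mono) auto
      also have "\<dots> \<le> K1 / 2 * (2 * (std_phi u / u) * D1 u)" using up K1 by (intro mult_left_mono) auto
      also have "\<dots> = K1 * (std_phi u / u) * D1 u" by simp
      finally have "B u \<le> K1 * (std_phi u / u) * D1 u" .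
      then have "B u / (K1 * (std_phi u / u) * D1 u) \<le> 1" by (simp only: divide_le_eq_1_pos[OF den])
      then show ?thesis by simp
    next
      case False
      then have "B u \<le> 0" using elim(2) by (metis not_less sgn_le_0_iff)
      then have "B u / (K1 * (std_phi u / u) * D1 u) \<le> 0" using den by (rule divide_nonpos_pos)
      then show ?thesis by simp
    qed
  qed
  have L1: "Limsup at_top (\<lambda>u. ereal (B u / (K1 * (std_phi u / u) * D1 u))) \<le> 1"
    by (rule Limsup_bounded[OF part1])
  define a where "a = sqrt (2 * (2 - \<delta>)) - 1"
  have a1: "1 + a = sqrt (2 * (2 - \<delta>))" by (simp add: a_def)
  have sq2: "sqrt 2 < sqrt (2 * (2 - \<delta>))" "sqrt (2 * (2 - \<delta>)) < sqrt 4"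
    using delta by (intro real_sqrt_less_mono; simp)+
  have "1 < sqrt 2" by simp
  moreover have "sqrt (4::real) = 2" by (simp add: real_sqrt_eq_iff)
  ultimately have a: "0 < a" "a < 1" using sq2 by (auto simp: a_def)
  have k: "0 < 2 - \<delta>" "2 - \<delta> \<le> 1 + a"
  proof -
    show "0 < 2 - \<delta>" using delta by simp
    have "sqrt ((2 - \<delta>)\<^sup>2) \<le> sqrt (2 * (2 - \<delta>))"
    proof (intro real_sqrt_le_mono)
      have "\<delta> * \<delta> \<le> 2 * \<delta>" using delta by (intro mult_right_mono) auto
      then show "(2 - \<delta>)\<^sup>2 \<le> 2 * (2 - \<delta>)" by (simp add: power2_eq_square algebra_simps)
    qed
    then show "2 - \<delta> \<le> 1 + a" unfolding a1 using delta by simp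
  qed
  define \<eta> where "\<eta> = sqrt ((1 - a) / (1 + a))"
  have eta: "0 < \<eta>" "\<eta> \<le> 1" using a by (auto simp: \<eta>_def)
  have gga: "\<And>u. gg u a = u * \<eta>" by (simp add: gg_def \<eta>_def)
  obtain P2 where P2: "P2 > 0" and evD2: "eventually (\<lambda>u. D2 u \<ge> P2 * (2 * u powr (-2/\<alpha>)) ^ n) at_top"
    using Dk_lower[OF meas r local r0 c alpha(1) eps k(1)] unfolding D2_def n_def by auto
  define V where "V = measure lborel (cbox (- \<epsilon> *\<^sub>R One) (\<epsilon> *\<^sub>R (One::'d)))"
  have V: "V \<ge> 0" by (simp add: V_def)
  define E where "E u = V * ((1 + a) * Phi_bar (u * \<eta>) + Phi_bar u) / ((1 + a) * D2 u)" for u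
  define W where "W = V * (2 + a) / ((1 + a) * P2 * 2 ^ n)"
  have Elim: "(E \<longlongrightarrow> 0) at_top"
  proof (rule tendsto_sandwich[of "\<lambda>_. 0" E at_top "\<lambda>u. W * (std_phi (u * \<eta>) / (u * \<eta>) / u powr (-2/\<alpha> * real n))"])
    have "eventually (\<lambda>u. 0 \<le> E u \<and> E u \<le> W * (std_phi (u * \<eta>) / (u * \<eta>) / u powr (-2/\<alpha> * real n))) at_top"
      using evD2 eventually_gt_at_top[of 0]
    proof eventually_elim
      case (elim u)
      have pw: "(2 * u powr (-2/\<alpha>)) ^ n = 2 ^ n * u powr (-2/\<alpha> * real n)"
        using elim(2) by (rule pow_powr_aux)
      have low: "D2 u \<ge> P2 * 2 ^ n * u powr (-2/\<alpha> * real n)" using elim(1) unfolding pw by simp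
      have lowp: "P2 * 2 ^ n * u powr (-2/\<alpha> * real n) > 0" using P2 elim by simp
      have D2p: "D2 u > 0" using low lowp by linarith
      have pb: "Phi_bar u \<le> Phi_bar (u * \<eta>)" using eta elim by (intro Phi_bar_mono) (simp add: mult_left_le)
      have pb2: "Phi_bar (u * \<eta>) \<le> std_phi (u * \<eta>) / (u * \<eta>)" using eta elim by (intro Phi_bar_le) simp
      have num: "0 \<le> V * ((1 + a) * Phi_bar (u * \<eta>) + Phi_bar u)"
        using V a by (intro mult_nonneg_nonneg add_nonneg_nonneg) (auto simp: Phi_bar_nonneg)
      have num2: "V * ((1 + a) * Phi_bar (u * \<eta>) + Phi_bar u) \<le> V * (2 + a) * (std_phi (u * \<eta>) / (u * \<eta>))"
      proof -
        have "(1 + a) * Phi_bar (u * \<eta>) + Phi_bar u \<le> (2 + a) * Phi_bar (u * \<eta>)" using pb by (simp add: algebra_simps)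
        also have "\<dots> \<le> (2 + a) * (std_phi (u * \<eta>) / (u * \<eta>))" using pb2 a by (intro mult_left_mono) auto
        finally have "V * ((1 + a) * Phi_bar (u * \<eta>) + Phi_bar u) \<le> V * ((2 + a) * (std_phi (u * \<eta>) / (u * \<eta>)))"
          using V by (rule mult_left_mono)
        then show ?thesis by (simp only: mult.assoc)
      qed
      have "E u \<le> V * (2 + a) * (std_phi (u * \<eta>) / (u * \<eta>)) / ((1 + a) * D2 u)"
        unfolding E_def using num2 D2p a by (intro divide_right_mono) auto
      also have "\<dots> \<le> V * (2 + a) * (std_phi (u * \<eta>) / (u * \<eta>)) / ((1 + a) * (P2 * 2 ^ n * u powr (-2/\<alpha> * real n)))"
        using low lowp a V eta elim std_phi_pos[of "u * \<eta>"] P2 D2p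
        by (intro divide_left_mono mult_left_mono mult_nonneg_nonneg mult_pos_pos) auto
      also have "\<dots> = W * (std_phi (u * \<eta>) / (u * \<eta>) / u powr (-2/\<alpha> * real n))"
        by (simp add: W_def field_simps)
      finally have "E u \<le> W * (std_phi (u * \<eta>) / (u * \<eta>) / u powr (-2/\<alpha> * real n))" .
      moreover have "0 \<le> E u" unfolding E_def using num D2p a by simp
      ultimately show ?case by simp
    qed
    then show "eventually (\<lambda>u. 0 \<le> E u) at_top" "eventually (\<lambda>u. E u \<le> W * (std_phi (u * \<eta>) / (u * \<eta>) / u powr (-2/\<alpha> * real n))) at_top"
      by (auto elim: eventually_mono)
    have "((\<lambda>u. std_phi (u * \<eta>) / (u * \<eta>) / (u powr (-2/\<alpha> * real n))) \<longlongrightarrow> 0) at_top"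
      using eta alpha unfolding std_phi_def by real_asymp
    then show "((\<lambda>u. W * (std_phi (u * \<eta>) / (u * \<eta>) / u powr (-2/\<alpha> * real n))) \<longlongrightarrow> 0) at_top"
      by (intro tendsto_mult_right_zero)
  qed simp
  define h where "h u = R u * (1 - E u)" for u
  have hlim: "(h \<longlongrightarrow> 1) at_top" unfolding h_def using Rlim Elim by (auto intro!: tendsto_eq_intros)
  define den2 where "den2 u = sqrt (2 * (2 - \<delta>)) * (std_phi u / u) * D2 u" for u
  have evR: "eventually (\<lambda>u. R u > 1/2) at_top" by (rule order_tendstoD(1)[OF Rlim]) simp
  have evE: "eventually (\<lambda>u. E u < 1/2) at_top" by (rule order_tendstoD(2)[OF Elim]) simp
  have part2: "eventually (\<lambda>u. ereal (h u) \<le> ereal (B u / den2 u)) at_top"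
    using evD2 sgn evR evE eventually_gt_at_top[of 0]
  proof eventually_elim
    case (elim u)
    have c0: "std_phi u / u > 0" using elim std_phi_pos[of u] by simp
    have D2p: "D2 u > 0" using elim(1) mult_pos_pos[OF P2 powpos[OF elim(5)]] by linarith
    have den: "den2 u > 0" unfolding den2_def a1[symmetric] using c0 D2p a by (intro mult_pos_pos) auto
    have lo: "I u \<ge> (1 + a) * (std_phi u / u) * D2 u
           - V * ((1 + a) * (std_phi u / u) * Phi_bar (gg u a) + (std_phi u / u) * Phi_bar u)"
      unfolding I_def D2_def V_def using elim r a k by (intro cube_lower) auto
    have lo2: "I u \<ge> den2 u * (1 - E u)"
    proof -
      have "den2 u * (1 - E u) = (1 + a) * (std_phi u / u) * D2 u - (std_phi u / u) * (V * ((1 + a) * Phi_bar (u * \<eta>) + Phi_bar u))"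
      proof -
        have gen: "\<And>K D N cc :: real. K > 0 \<Longrightarrow> D > 0 \<Longrightarrow> K * cc * D * (1 - N / (K * D)) = K * cc * D - cc * N"
          by (simp add: field_simps)
        show ?thesis unfolding den2_def E_def a1[symmetric] using D2p a by (intro gen) auto
      qed
      also have "\<dots> = (1 + a) * (std_phi u / u) * D2 u
           - V * ((1 + a) * (std_phi u / u) * Phi_bar (gg u a) + (std_phi u / u) * Phi_bar u)"
      proof -
        have gen2: "\<And>cc::real. (1 + a) * cc * D2 u - cc * (V * ((1 + a) * Phi_bar (u * \<eta>) + Phi_bar u))
            = (1 + a) * cc * D2 u - V * ((1 + a) * cc * Phi_bar (u * \<eta>) + cc * Phi_bar u)"
          by (simp add: algebra_simps)
        show ?thesis unfolding gga by (rule gen2)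
      qed
      finally show ?thesis using lo by simp
    qed
    have "1 - E u > 0" using elim(4) by simp
    then have "den2 u * (1 - E u) > 0" using den by (rule mult_pos_pos[rotated])
    then have Ip: "I u > 0" using lo2 by linarith
    then have "R u = B u / I u" by (simp add: R_def)
    have "h u = R u * (1 - E u)" by (simp add: h_def)
    also have "\<dots> \<le> R u * (I u / den2 u)"
      using elim lo2 den by (intro mult_left_mono) (auto simp: field_simps)
    also have "\<dots> = B u / den2 u" using \<open>R u = B u / I u\<close> Ip by simp
    finally show ?case by simp
  qed
  have "Liminf at_top (\<lambda>u. ereal (h u)) \<le> Liminf at_top (\<lambda>u. ereal (B u / den2 u))"
    by (rule Liminf_mono[OF part2])
  moreover have "Liminf at_top (\<lambda>u. ereal (h u)) = 1"
    using hlim by (intro lim_imp_Liminf) (auto simp: one_ereal_def)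
  ultimately have L2: "1 \<le> Liminf at_top (\<lambda>u. ereal (B u / den2 u))" by simp
  show ?thesis using L1 L2 unfolding K1_def D1_def den2_def D2_def by simp
qed

end
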